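(* Let $G=(V,E)$ be an undirected unweighted graph on $n$ nodes and let $H$ be the subgraph produced by the construction described in the context. For any two nodes $s,t\in V$ that are uncovered in $H$ and such that the canonical shortest path $\pi_G(s,t)$ has more than $\mu^3/n$ heavy nodes, we have $\texttt{dist}_H(s,t)\le\texttt{dist}_G(s,t)+4$ with probability at least $1-\frac{1}{n^3}$.
   Context: Let $\mu=\lceil n^{2/5}\log^{1/5}n\rceil$. A node is heavy if its degree in $G$ is at least $\mu$, and light otherwise; an edge is heavy if at least one endpoint is heavy. $\Gamma_G(v)$ denotes the set consisting of $v$ and its neighbors; for nodes $u,v$, $\pi_G(u,v)$ is a fixed (canonical) shortest $u\leadsto v$ path, $|P|$ is the number of edges of a path $P$, and $\circ$ is path concatenation. A node is uncovered in $H$ if not all of its incident edges in $G$ belong to $H$. Weak CSSSP: given $G$, gray edges $E_g\subseteq E$, source $s$, positive integer $g$, an $s\leadsto t$ path is $g$-short if it has fewer than $g$ gray edges and has the form $(s,s')\circ\pi_G(s',t')\circ(t',t)$ with $\pi_G(s',t')$ a shortest path and $(s,s'),(t',t)$ edges (or empty when $s'=s$, resp. $t'=t$). A solution outputs, for every $t$, an $s\leadsto t$ path $P(s,t)$ such that whenever an $s\leadsto t$ $g$-short path exists, $P(s,t)$ has at most $5g$ gray edges and $|P(s,t)|\le|P_g(s,t)|$ for every $s\leadsto t$ path $P_g(s,t)$ with fewer than $g$ gray edges (otherwise $P(s,t)$ is arbitrary). Construction of $H=(V,E')$: (1) $E'$ := all edges incident to light nodes. (2) Sample a set $S_1$ by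 including each node independently with probability $9\mu/n$; for each $x\in S_1$ add to $E'$ the edges of a BFS tree rooted at $x$ spanning $V$. (3) Sample a set $S_2$ by including each node independently with probability $1/\mu$; for each heavy node $x$ with $(\{x\}\cup\Gamma_G(x))\cap S_2=\varnothing$, add all edges incident to $x$ to $E'$. (4) For each heavy node $v\notin S_2$ with $\Gamma_G(v)\cap S_2\neq\varnothing$, choose arbitrarily one $x\in\Gamma_G(v)\cap S_2$ and add $(x,v)$ to $E'$. (5) For each $x_1\in S_2$, solve weak CSSSP on $G$ with source $x_1$, gray edges the heavy edges, and $g=\mu^3/n+2$, obtaining paths $P(x_1,x_2)$ for all $x_2\in V$; add the edges of $P(x_1,x_2)$ to $E'$ for every $x_2\in S_2$. The probability is over the random samples $S_1,S_2$. *)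

theory Defs
  imports "HOL-Probability.Probability"
begin

definition walk :: "'a set \<Rightarrow> 'a set set \<Rightarrow> 'a list \<Rightarrow> bool" where
  "walk V E p \<longleftrightarrow> p \<noteq> [] \<and> set p \<subseteq> V \<and> (\<forall>i < length p - 1. {p ! i, p ! Suc i} \<in> E)"

definition is_path :: "'a set \<Rightarrow> 'a set set \<Rightarrow> 'a \<Rightarrow> 'a \<Rightarrow> 'a list \<Rightarrow> bool" where
  "is_path V E u v p \<longleftrightarrow> walk V E p \<and> distinct p \<and> hd p = u \<and> last p = v"

definition plen :: "'a list \<Rightarrow> nat" where
  "plen p = length p - 1"

definition edge_list :: "'a list \<Rightarrow> 'a set list" where
  "edge_list p = map (\<lambda>i. {p ! i, p ! Suc i}) [0..<length p - 1]"

definition edges_of :: "'a list \<Rightarrow> 'a set set" where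
  "edges_of p = set (edge_list p)"

definition dist :: "'a set \<Rightarrow> 'a set set \<Rightarrow> 'a \<Rightarrow> 'a \<Rightarrow> enat" where
  "dist V E u v = (INF p \<in> {p. walk V E p \<and> hd p = u \<and> last p = v}. enat (plen p))"

definition simple_graph :: "'a set \<Rightarrow> 'a set set \<Rightarrow> bool" where
  "simple_graph V E \<longleftrightarrow> finite V \<and> (\<forall>e\<in>E. e \<subseteq> V \<and> card e = 2)"

definition connected_graph :: "'a set \<Rightarrow> 'a set set \<Rightarrow> bool" where
  "connected_graph V E \<longleftrightarrow> (\<forall>u\<in>V. \<forall>v\<in>V. dist V E u v < \<infinity>)"

definition degree :: "'a set set \<Rightarrow> 'a \<Rightarrow> nat" where
  "degree E v = card {e \<in> E. v \<in> e}"

definition Gamma :: "'a set set \<Rightarrow> 'a \<Rightarrow> 'a set" where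
  "Gamma E v = insert v {u. {u, v} \<in> E}"

definition mu :: "nat \<Rightarrow> nat" where
  "mu n = nat \<lceil>real n powr (2/5) * ln (real n) powr (1/5)\<rceil>"

definition heavy :: "'a set \<Rightarrow> 'a set set \<Rightarrow> 'a \<Rightarrow> bool" where
  "heavy V E v \<longleftrightarrow> degree E v \<ge> mu (card V)"

definition heavy_edge :: "'a set \<Rightarrow> 'a set set \<Rightarrow> 'a set \<Rightarrow> bool" where
  "heavy_edge V E e \<longleftrightarrow> (\<exists>v\<in>e. heavy V E v)"

definition canonical_sp :: "'a set \<Rightarrow> 'a set set \<Rightarrow> ('a \<Rightarrow> 'a \<Rightarrow> 'a list) \<Rightarrow> bool" where
  "canonical_sp V E \<pi> \<longleftrightarrow> (\<forall>u\<in>V. \<forall>v\<in>V. is_path V E u v (\<pi> u v) \<and> enat (plen (\<pi> u v)) = dist V E u v)"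

definition gray_count :: "'a set set \<Rightarrow> 'a list \<Rightarrow> nat" where
  "gray_count Eg p = length (filter (\<lambda>e. e \<in> Eg) (edge_list p))"

definition g_short :: "'a set \<Rightarrow> 'a set set \<Rightarrow> ('a \<Rightarrow> 'a \<Rightarrow> 'a list) \<Rightarrow> 'a set set \<Rightarrow> real
                      \<Rightarrow> 'a \<Rightarrow> 'a \<Rightarrow> 'a list \<Rightarrow> bool" where
  "g_short V E \<pi> Eg g s t p \<longleftrightarrow> is_path V E s t p \<and> real (gray_count Eg p) < g \<and>
     (\<exists>s' t'. (s' = s \<or> {s, s'} \<in> E) \<and> (t' = t \<or> {t', t} \<in> E) \<and> s' \<in> V \<and> t' \<in> V \<and>
        p = (if s' = s then [] else [s]) @ \<pi> s' t' @ (if t' = t then [] else [t]))"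

definition weak_csssp :: "'a set \<Rightarrow> 'a set set \<Rightarrow> ('a \<Rightarrow> 'a \<Rightarrow> 'a list) \<Rightarrow> 'a set set \<Rightarrow> real
                          \<Rightarrow> 'a \<Rightarrow> ('a \<Rightarrow> 'a list) \<Rightarrow> bool" where
  "weak_csssp V E \<pi> Eg g s P \<longleftrightarrow> (\<forall>t\<in>V. is_path V E s t (P t) \<and>
     ((\<exists>q. g_short V E \<pi> Eg g s t q) \<longrightarrow>
        real (gray_count Eg (P t)) \<le> 5 * g \<and>
        (\<forall>q. is_path V E s t q \<and> real (gray_count Eg q) < g \<longrightarrow> plen (P t) \<le> plen q)))"

definition spanning_tree :: "'a set \<Rightarrow> 'a set set \<Rightarrow> 'a set set \<Rightarrow> bool" where
  "spanning_tree V E T \<longleftrightarrow> T \<subseteq> E \<and> connected_graph V T \<and> card T = card V - 1"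

definition bfs_tree :: "'a set \<Rightarrow> 'a set set \<Rightarrow> 'a \<Rightarrow> 'a set set \<Rightarrow> bool" where
  "bfs_tree V E x T \<longleftrightarrow> spanning_tree V E T \<and> (\<forall>v\<in>V. dist V T x v = dist V E x v)"

(* E' is an edge set obtainable by the construction (1)-(5) for samples S1, S2,
   for some admissible choice of BFS trees, step-(4) neighbours and CSSSP solutions *)
definition construction :: "'a set \<Rightarrow> 'a set set \<Rightarrow> ('a \<Rightarrow> 'a \<Rightarrow> 'a list) \<Rightarrow> 'a set \<Rightarrow> 'a set
                            \<Rightarrow> 'a set set \<Rightarrow> bool" where
  "construction V E \<pi> S1 S2 E' \<longleftrightarrow>
    (\<exists>T c P.
       (\<forall>x\<in>S1. bfs_tree V E x (T x)) \<and>
       (\<forall>v\<in>V. heavy V E v \<and> v \<notin> S2 \<and> Gamma E v \<inter> S2 \<noteq> {} \<longrightarrow> c v \<in> Gamma E v \<inter> S2) \<and>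
       (\<forall>x1\<in>S2. weak_csssp V E \<pi> {e\<in>E. heavy_edge V E e}
                   (real (mu (card V)) ^ 3 / real (card V) + 2) x1 (P x1)) \<and>
       E' = {e\<in>E. \<exists>v\<in>e. \<not> heavy V E v}
          \<union> (\<Union>x\<in>S1. T x)
          \<union> {e\<in>E. \<exists>x\<in>e. heavy V E x \<and> (insert x (Gamma E x)) \<inter> S2 = {}}
          \<union> {{c v, v} | v. v \<in> V \<and> heavy V E v \<and> v \<notin> S2 \<and> Gamma E v \<inter> S2 \<noteq> {}}
          \<union> (\<Union>x1\<in>S2. \<Union>x2\<in>S2. edges_of (P x1 x2)))"

definition uncovered :: "'a set set \<Rightarrow> 'a set set \<Rightarrow> 'a \<Rightarrow> bool" where
  "uncovered E E' v \<longleftrightarrow> (\<exists>e\<in>E. v \<in> e \<and> e \<notin> E')"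

definition sample_set :: "'a set \<Rightarrow> real \<Rightarrow> 'a set pmf" where
  "sample_set V p = map_pmf (\<lambda>f. {x \<in> V. f x})
      (Pi_pmf V False (\<lambda>_. bernoulli_pmf (min 1 (max 0 p))))"

definition samples :: "'a set \<Rightarrow> ('a set \<times> 'a set) pmf" where
  "samples V = pair_pmf (sample_set V (9 * real (mu (card V)) / real (card V)))
                        (sample_set V (1 / real (mu (card V))))"

end

theory Submission
  imports Defs
begin


lemma walk_single[simp]: "walk V E [a] \<longleftrightarrow> a \<in> V"
  by (simp add: walk_def)

lemma walk_Cons2[simp]: "walk V E (a # b # p) \<longleftrightarrow> a \<in> V \<and> {a, b} \<in> E \<and> walk V E (b # p)"
proof
  assume h: "walk V E (a # b # p)"
  have "\<forall>i < length (b#p) - 1. {(b#p) ! i, (b#p) ! Suc i} \<in> E"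
  proof (intro allI impI)
    fix i assume "i < length (b#p) - 1"
    then have "Suc i < length (a#b#p) - 1" by simp
    then show "{(b#p) ! i, (b#p) ! Suc i} \<in> E" using h unfolding walk_def by fastforce
  qed
  moreover have "{a,b} \<in> E" using h unfolding walk_def by fastforce
  ultimately show "a \<in> V \<and> {a, b} \<in> E \<and> walk V E (b # p)" using h unfolding walk_def by auto
next
  assume h: "a \<in> V \<and> {a, b} \<in> E \<and> walk V E (b # p)"
  show "walk V E (a # b # p)" unfolding walk_def
  proof (intro conjI allI impI)
    show "set (a # b # p) \<subseteq> V" using h unfolding walk_def by auto
    fix i assume i: "i < length (a # b # p) - 1"
    show "{(a # b # p) ! i, (a # b # p) ! Suc i} \<in> E"
    proof (cases i)
      case 0 then show ?thesis using h by simp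
    next
      case (Suc j) then show ?thesis using h i unfolding walk_def by auto
    qed
  qed simp
qed

lemma walk_append:
  assumes "walk V E p" "walk V E q" "{last p, hd q} \<in> E"
  shows "walk V E (p @ q)"
  using assms
proof (induction p rule: induct_list012)
  case 1 then show ?case by (simp add: walk_def)
next
  case (2 x) then show ?case by (cases q) auto
next
  case (3 x y zs) then show ?case by auto
qed

lemma walk_rev: "walk V E p \<Longrightarrow> walk V E (rev p)"
proof (induction p rule: induct_list012)
  case 1 then show ?case by (simp add: walk_def)
next
  case (2 x) then show ?case by simp
next
  case (3 x y zs)
  have "walk V E (rev (y # zs) @ [x])"
    by (rule walk_append) (use 3 in \<open>auto simp: insert_commute\<close>)
  then show ?case by simp
qed

lemma walk_mono: "walk V E p \<Longrightarrow> E \<subseteq> E' \<Longrightarrow> walk V E' p"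
  unfolding walk_def by blast

lemma walk_join:
  assumes "walk V E p" "walk V E q" "last p = hd q"
  shows "walk V E (p @ tl q) \<and> hd (p @ tl q) = hd p \<and> last (p @ tl q) = last q
         \<and> plen (p @ tl q) = plen p + plen q"
proof (cases "tl q")
  case Nil
  then have "q = [hd q]" using assms(2) unfolding walk_def by (cases q) auto
  then show ?thesis using assms Nil by (metis append_Nil2 add_0_right list.sel(1) last_ConsL length_Cons list.size(3) plen_def diff_Suc_1)
next
  case (Cons a r)
  then have q: "q = hd q # a # r" using assms(2) unfolding walk_def by (cases q) auto
  then have "{hd q, a} \<in> E" "walk V E (a # r)" using assms(2) by (metis walk_Cons2)+
  then have "walk V E (p @ tl q)" using assms Cons by (intro walk_append) auto
  moreover have "p \<noteq> []" using assms unfolding walk_def by auto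
  moreover have "last (p @ tl q) = last q" using Cons q by (metis last_appendR last_tl list.distinct(1))
  moreover have "length q = Suc (Suc (length r))" using q by (metis length_Cons)
  ultimately show ?thesis using Cons \<open>p \<noteq> []\<close> unfolding plen_def by auto
qed

lemma walk_take:
  assumes "walk V E p" "i < length p"
  shows "walk V E (take (Suc i) p) \<and> hd (take (Suc i) p) = hd p \<and> last (take (Suc i) p) = p ! i
         \<and> plen (take (Suc i) p) = i"
proof -
  have "walk V E (take (Suc i) p)" using assms unfolding walk_def
    by (auto dest: in_set_takeD)
  moreover have "last (take (Suc i) p) = p ! i"
    using assms by (simp add: take_Suc_conv_app_nth)
  ultimately show ?thesis using assms unfolding plen_def walk_def
    by (auto simp: min_def hd_conv_nth)
qed

lemma walk_drop:
  assumes "walk V E p" "i < length p"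
  shows "walk V E (drop i p) \<and> hd (drop i p) = p ! i \<and> last (drop i p) = last p
         \<and> plen (drop i p) = plen p - i"
proof -
  have "walk V E (drop i p)" using assms unfolding walk_def
    by (auto dest: in_set_dropD simp: add.commute)
  then show ?thesis using assms unfolding plen_def walk_def
    by (auto simp: hd_drop_conv_nth)
qed

lemma dist_le: "walk V E p \<Longrightarrow> dist V E (hd p) (last p) \<le> enat (plen p)"
  unfolding dist_def by (rule INF_lower) auto

lemma dist_attained:
  assumes "dist V E u v \<noteq> \<infinity>"
  shows "\<exists>p. walk V E p \<and> hd p = u \<and> last p = v \<and> enat (plen p) = dist V E u v"
proof -
  let ?S = "{p. walk V E p \<and> hd p = u \<and> last p = v}"
  have ne: "?S \<noteq> {}"
  proof
    assume "?S = {}"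
    then have "dist V E u v = (INF p\<in>({}::'a list set). enat (plen p))" unfolding dist_def by (simp only:)
    then show False using assms by (simp add: top_enat_def)
  qed
  have "Inf ((\<lambda>p. enat (plen p)) ` ?S) \<in> (\<lambda>p. enat (plen p)) ` ?S"
    unfolding Inf_enat_def using ne by (auto intro: LeastI)
  then show ?thesis unfolding dist_def by auto
qed

lemma dist_triangle: "dist V E u w \<le> dist V E u v + dist V E v w"
proof (cases "dist V E u v = \<infinity> \<or> dist V E v w = \<infinity>")
  case True then show ?thesis by auto
next
  case False
  then obtain p q where p: "walk V E p" "hd p = u" "last p = v" "enat (plen p) = dist V E u v"
    and q: "walk V E q" "hd q = v" "last q = w" "enat (plen q) = dist V E v w"
    using dist_attained by metis
  have j: "walk V E (p @ tl q) \<and> hd (p @ tl q) = hd p \<and> last (p @ tl q) = last q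
         \<and> plen (p @ tl q) = plen p + plen q" using walk_join[OF p(1) q(1)] p q by simp
  have "dist V E u w \<le> enat (plen (p @ tl q))" using dist_le[of V E "p @ tl q"] j p q by simp
  also have "\<dots> = dist V E u v + dist V E v w" using j p(4) q(4) by (metis plus_enat_simps(1))
  finally show ?thesis .
qed

lemma dist_sym: "dist V E u v = dist V E v u"
proof -
  have "dist V E u v \<le> dist V E v u" for u v
  proof (cases "dist V E v u = \<infinity>")
    case False
    then obtain p where p: "walk V E p" "hd p = v" "last p = u" "enat (plen p) = dist V E v u"
      using dist_attained by metis
    have "dist V E u v \<le> enat (plen (rev p))"
      using dist_le[OF walk_rev[OF p(1)]] p(1) unfolding walk_def
      by (simp add: hd_rev last_rev p)
    then show ?thesis using p by (simp add: plen_def)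
  qed simp
  then show ?thesis by (metis order_antisym)
qed

lemma dist_mono: "E \<subseteq> E' \<Longrightarrow> dist V E' u v \<le> dist V E u v"
  unfolding dist_def by (rule INF_superset_mono) (auto intro: walk_mono)

lemma dist_edge: "{u, v} \<in> E \<Longrightarrow> u \<in> V \<Longrightarrow> v \<in> V \<Longrightarrow> dist V E u v \<le> 1"
  using dist_le[of V E "[u, v]"] by (simp add: plen_def one_enat_def)



lemma sp_facts:
  assumes "canonical_sp V E \<pi>" "s \<in> V" "t \<in> V"
  shows "walk V E (\<pi> s t) \<and> hd (\<pi> s t) = s \<and> last (\<pi> s t) = t \<and> enat (plen (\<pi> s t)) = dist V E s t
         \<and> plen (\<pi> s t) = length (\<pi> s t) - 1"
  using assms unfolding canonical_sp_def is_path_def plen_def by auto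

lemma edge_in_V: "simple_graph V E \<Longrightarrow> {x, y} \<in> E \<Longrightarrow> x \<in> V \<and> y \<in> V"
  unfolding simple_graph_def by auto

lemma geom:
  assumes G: "simple_graph V E" and cs: "canonical_sp V E \<pi>" and st: "s \<in> V" "t \<in> V"
    and ij: "i < length (\<pi> s t)" "j < length (\<pi> s t)"
    and ex: "{x, \<pi> s t ! i} \<in> E" "{x, \<pi> s t ! j} \<in> E"
  shows "j \<le> i + 2"
proof -
  define p where "p = \<pi> s t"
  define L where "L = plen p"
  have f: "walk V E p" "hd p = s" "last p = t" "enat L = dist V E s t" "L = length p - 1"
    using sp_facts[OF cs st] unfolding p_def L_def by auto
  have xi: "x \<in> V" "p ! i \<in> V" "p ! j \<in> V" using edge_in_V[OF G] ex unfolding p_def by blast+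
  have d1: "dist V E s (p ! i) \<le> enat i"
    using walk_take[OF f(1), of i] ij f dist_le[of V E "take (Suc i) p"] unfolding p_def by auto
  have d2: "dist V E (p ! j) t \<le> enat (L - j)"
    using walk_drop[OF f(1), of j] ij f dist_le[of V E "drop j p"] unfolding p_def L_def by auto
  have d3: "dist V E (p ! i) x \<le> 1" using dist_edge[of "p ! i" x E V] ex xi unfolding p_def by (simp add: insert_commute)
  have d4: "dist V E x (p ! j) \<le> 1" using dist_edge[of x "p ! j" E V] ex xi unfolding p_def by simp
  have "dist V E s t \<le> dist V E s (p ! i) + dist V E (p ! i) x + dist V E x (p ! j) + dist V E (p ! j) t"
    by (meson dist_triangle add_mono order_trans order_refl)
  also have "\<dots> \<le> enat i + 1 + 1 + enat (L - j)"
    using d1 d2 d3 d4 by (intro add_mono) auto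
  also have "\<dots> = enat (i + 2 + (L - j))" by (simp add: one_enat_def)
  finally have "enat L \<le> enat (i + 2 + (L - j))" using f(4) by simp
  then have "L \<le> i + 2 + (L - j)" by simp
  then show ?thesis using ij f(5) unfolding p_def by linarith
qed

lemma close:
  assumes G: "simple_graph V E" and cs: "canonical_sp V E \<pi>" and st: "s \<in> V" "t \<in> V"
    and ij: "i < length (\<pi> s t)" and ex: "{x, \<pi> s t ! i} \<in> E"
  shows "dist V E x s + dist V E x t \<le> dist V E s t + 2"
proof -
  define p where "p = \<pi> s t"
  define L where "L = plen p"
  have f: "walk V E p" "hd p = s" "last p = t" "enat L = dist V E s t" "L = length p - 1"
    using sp_facts[OF cs st] unfolding p_def L_def by auto
  have xi: "x \<in> V" "p ! i \<in> V" using edge_in_V[OF G] ex unfolding p_def by blast+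
  have d1: "dist V E (p ! i) s \<le> enat i"
    using walk_take[OF f(1), of i] ij f dist_le[of V E "take (Suc i) p"] dist_sym[of V E s] unfolding p_def by auto
  have d2: "dist V E (p ! i) t \<le> enat (L - i)"
    using walk_drop[OF f(1), of i] ij f dist_le[of V E "drop i p"] unfolding p_def L_def by auto
  have d3: "dist V E x (p ! i) \<le> 1" using dist_edge[of x "p ! i" E V] ex xi unfolding p_def by simp
  have "dist V E x s + dist V E x t \<le> (dist V E x (p ! i) + dist V E (p ! i) s) + (dist V E x (p ! i) + dist V E (p ! i) t)"
    by (intro add_mono dist_triangle)
  also have "\<dots> \<le> (1 + enat i) + (1 + enat (L - i))"
    using d1 d2 d3 by (intro add_mono) auto
  also have "\<dots> = enat L + 2" using ij f(5) unfolding p_def by (simp add: one_enat_def numeral_eq_enat)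
  finally show ?thesis using f(4) by simp
qed

lemma card_adj_le3:
  assumes G: "simple_graph V E" and cs: "canonical_sp V E \<pi>" and st: "s \<in> V" "t \<in> V"
  shows "card {w \<in> set (\<pi> s t). {x, w} \<in> E} \<le> 3"
proof -
  define p where "p = \<pi> s t"
  define I where "I = {i. i < length p \<and> {x, p ! i} \<in> E}"
  have sub: "{w \<in> set (\<pi> s t). {x, w} \<in> E} \<subseteq> (\<lambda>i. p ! i) ` I"
    unfolding I_def p_def by (auto simp: in_set_conv_nth)
  show ?thesis
  proof (cases "I = {}")
    case True
    then have e0: "{w \<in> set (\<pi> s t). {x, w} \<in> E} = {}" using sub by blast
    show ?thesis unfolding e0 by simp
  next
    case False
    have fin: "finite I" unfolding I_def by simp
    define a where "a = Min I"
    have aI: "a \<in> I" using Min_in[OF fin False] unfolding a_def .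
    have "I \<subseteq> {a..a+2}"
    proof
      fix j assume j: "j \<in> I"
      have "a \<le> j" using Min_le[OF fin j] unfolding a_def .
      moreover have "j \<le> a + 2" using geom[OF G cs st, of a j x] aI j unfolding I_def p_def by auto
      ultimately show "j \<in> {a..a+2}" by simp
    qed
    then have "card {w \<in> set (\<pi> s t). {x, w} \<in> E} \<le> card ((\<lambda>i. p ! i) ` {a..a+2})"
      using sub \<open>I \<subseteq> {a..a+2}\<close> by (intro card_mono) (auto, blast)
    also have "\<dots> \<le> card {a..a+2}" by (rule card_image_le) simp
    finally show ?thesis by simp
  qed
qed

lemma card_nb:
  assumes G: "simple_graph V E"
  shows "card {u. {u, w} \<in> E} = degree E w"
proof -
  have inj: "inj_on (\<lambda>u. {u, w}) {u. {u, w} \<in> E}"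
    by (auto simp: inj_on_def doubleton_eq_iff)
  have "(\<lambda>u. {u, w}) ` {u. {u, w} \<in> E} = {e \<in> E. w \<in> e}"
  proof (intro equalityI subsetI)
    fix e assume "e \<in> {e \<in> E. w \<in> e}"
    then have e: "e \<in> E" "w \<in> e" by auto
    then have "card e = 2" using G unfolding simple_graph_def by auto
    then obtain a b where ab: "e = {a, b}" "a \<noteq> b" by (auto simp: card_2_iff)
    then have "e = {if a = w then b else a, w}" using e by auto
    then show "e \<in> (\<lambda>u. {u, w}) ` {u. {u, w} \<in> E}" using e by (auto intro!: image_eqI)
  qed auto
  then show ?thesis unfolding degree_def using card_image[OF inj] by simp
qed



lemma count_lemma:
  assumes G: "simple_graph V E" and cs: "canonical_sp V E \<pi>" and st: "s \<in> V" "t \<in> V"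
  defines "W \<equiv> {v \<in> set (\<pi> s t). heavy V E v}"
  defines "N \<equiv> {u. \<exists>w\<in>W. {u, w} \<in> E}"
  shows "card W * mu (card V) \<le> 3 * card N" and "N \<subseteq> V"
proof -
  have finV: "finite V" using G unfolding simple_graph_def by simp
  show NV: "N \<subseteq> V" unfolding N_def using edge_in_V[OF G] by blast
  have finN: "finite N" using NV finV finite_subset by blast
  have finW: "finite W" unfolding W_def by simp
  have finNb: "finite {u. {u, w} \<in> E}" for w
    using edge_in_V[OF G] finV by (metis (no_types, lifting) finite_subset mem_Collect_eq subsetI)
  have "card W * mu (card V) = (\<Sum>w\<in>W. mu (card V))" by simp
  also have "\<dots> \<le> (\<Sum>w\<in>W. degree E w)"
    by (intro sum_mono) (auto simp: W_def heavy_def)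
  also have "\<dots> = (\<Sum>w\<in>W. card {u. {u, w} \<in> E})" using card_nb[OF G] by simp
  also have "\<dots> = card (SIGMA w:W. {u. {u, w} \<in> E})" using finW finNb by simp
  also have "\<dots> \<le> card ((\<lambda>(x, w). (w, x)) ` (SIGMA x:N. {w \<in> W. {x, w} \<in> E}))"
    using finN finW by (intro card_mono) (auto simp: N_def image_iff)
  also have "\<dots> \<le> card (SIGMA x:N. {w \<in> W. {x, w} \<in> E})" by (rule card_image_le) (use finN finW in auto)
  also have "\<dots> = (\<Sum>x\<in>N. card {w \<in> W. {x, w} \<in> E})" using finN finW by simp
  also have "\<dots> \<le> (\<Sum>x\<in>N. 3)"
  proof (intro sum_mono)
    fix x
    have "card {w \<in> W. {x, w} \<in> E} \<le> card {w \<in> set (\<pi> s t). {x, w} \<in> E}"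
      by (intro card_mono) (auto simp: W_def)
    then show "card {w \<in> W. {x, w} \<in> E} \<le> 3" using card_adj_le3[OF G cs st, of x] by linarith
  qed
  also have "\<dots> = 3 * card N" by simp
  finally show "card W * mu (card V) \<le> 3 * card N" .
qed

lemma prob_miss:
  assumes finV: "finite V" and NV: "N \<subseteq> V"
  shows "measure_pmf.prob (sample_set V q) {S. S \<inter> N = {}} = (1 - min 1 (max 0 q)) ^ card N"
proof -
  define r where "r = min 1 (max 0 q)"
  have r: "0 \<le> r" "r \<le> 1" unfolding r_def by auto
  have pre: "(\<lambda>f. {x \<in> V. f x}) -` {S. S \<inter> N = {}} = Pi V (\<lambda>x. if x \<in> N then {False} else UNIV)"
    using NV by (auto simp: Pi_def)
  have "measure_pmf.prob (sample_set V q) {S. S \<inter> N = {}} =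
        measure_pmf.prob (Pi_pmf V False (\<lambda>_. bernoulli_pmf r)) (Pi V (\<lambda>x. if x \<in> N then {False} else UNIV))"
    unfolding sample_set_def measure_map_pmf pre r_def ..
  also have "\<dots> = (\<Prod>x\<in>V. measure_pmf.prob (bernoulli_pmf r) (if x \<in> N then {False} else UNIV))"
    using finV by (rule measure_Pi_pmf_Pi)
  also have "\<dots> = (\<Prod>x\<in>V. if x \<in> N then 1 - r else 1)"
    by (intro prod.cong) (auto simp: measure_pmf_single r)
  also have "\<dots> = (1 - r) ^ card N"
    using finV NV by (simp add: prod.If_cases Int_absorb1 Int_absorb2)
  finally show ?thesis unfolding r_def .
qed

lemma mu5:
  assumes "n \<ge> 2"
  shows "real (mu n) ^ 5 \<ge> real n ^ 2 * ln (real n)"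
proof -
  define a where "a = real n powr (2/5) * ln (real n) powr (1/5)"
  have lnpos: "ln (real n) > 0" using assms by simp
  have a0: "a \<ge> 0" unfolding a_def by simp
  have "a \<le> real (mu n)" unfolding mu_def a_def by linarith
  then have "a ^ 5 \<le> real (mu n) ^ 5" using a0 by (intro power_mono) auto
  moreover have "a ^ 5 = real n ^ 2 * ln (real n)"
  proof -
    have "a ^ 5 = (real n powr (2/5)) ^ 5 * (ln (real n) powr (1/5)) ^ 5"
      unfolding a_def by (simp add: power_mult_distrib)
    also have "\<dots> = real n powr 2 * ln (real n) powr 1"
      using assms lnpos by (subst powr_power, simp)+ simp
    also have "\<dots> = real n ^ 2 * ln (real n)" using assms lnpos by simp
    finally show ?thesis .
  qed
  ultimately show ?thesis by simp
qed



theorem lemma6: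
  fixes V :: "'a set" and E :: "'a set set" and \<pi> :: "'a \<Rightarrow> 'a \<Rightarrow> 'a list"
    and Hc :: "'a set \<Rightarrow> 'a set \<Rightarrow> 'a set set" and s t :: 'a
  assumes "simple_graph V E"
    and "connected_graph V E"
    and "canonical_sp V E \<pi>"
    and "\<forall>S1 S2. S1 \<subseteq> V \<and> S2 \<subseteq> V \<longrightarrow> construction V E \<pi> S1 S2 (Hc S1 S2)"
    and "s \<in> V" and "t \<in> V"
    and "real (card {v \<in> set (\<pi> s t). heavy V E v}) > real (mu (card V)) ^ 3 / real (card V)"
  shows "measure_pmf.prob (samples V)
           {(S1, S2). uncovered E (Hc S1 S2) s \<and> uncovered E (Hc S1 S2) t \<longrightarrow>
                      dist V (Hc S1 S2) s t \<le> dist V E s t + 4}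
         \<ge> 1 - 1 / real (card V) ^ 3"
proof -
  note G = assms(1) and cs = assms(3) and cons = assms(4) and st = assms(5,6)
  define n where "n = card V"
  define m where "m = mu n"
  define W where "W = {v \<in> set (\<pi> s t). heavy V E v}"
  define N where "N = {u. \<exists>w\<in>W. {u, w} \<in> E}"
  define Ev where "Ev = {(S1, S2). uncovered E (Hc S1 S2) s \<and> uncovered E (Hc S1 S2) t \<longrightarrow>
                      dist V (Hc S1 S2) s t \<le> dist V E s t + 4}"
  have finV: "finite V" using G unfolding simple_graph_def by simp
  have n1: "n \<ge> 1" using st finV unfolding n_def by (metis One_nat_def Suc_leI card_gt_0_iff empty_iff)
  show ?thesis
  proof (cases "n = 1")
    case True
    then show ?thesis unfolding n_def[symmetric] by simp
  next
    case False
    then have n2: "n \<ge> 2" using n1 by simp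
    have cnt: "card W * m \<le> 3 * card N" and NV: "N \<subseteq> V"
      using count_lemma[OF G cs st] unfolding W_def N_def m_def n_def by auto
    have kbig: "real (card W) > real m ^ 3 / real n" using assms(7) unfolding W_def m_def n_def .
    have good: "(S1, S2) \<in> Ev" if S: "S1 \<subseteq> V" "S2 \<subseteq> V" "S1 \<inter> N \<noteq> {}" for S1 S2
    proof -
      obtain x where x: "x \<in> S1" "x \<in> N" using S by auto
      then obtain w where w: "w \<in> set (\<pi> s t)" "{x, w} \<in> E" unfolding N_def W_def by auto
      then obtain i where i: "i < length (\<pi> s t)" "w = \<pi> s t ! i" by (auto simp: in_set_conv_nth)
      have xV: "x \<in> V" using x NV by auto
      obtain T c P where T: "\<forall>x\<in>S1. bfs_tree V E x (T x)"
        and H: "Hc S1 S2 = {e\<in>E. \<exists>v\<in>e. \<not> heavy V E v}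
          \<union> (\<Union>x\<in>S1. T x)
          \<union> {e\<in>E. \<exists>x\<in>e. heavy V E x \<and> (insert x (Gamma E x)) \<inter> S2 = {}}
          \<union> {{c v, v} | v. v \<in> V \<and> heavy V E v \<and> v \<notin> S2 \<and> Gamma E v \<inter> S2 \<noteq> {}}
          \<union> (\<Union>x1\<in>S2. \<Union>x2\<in>S2. edges_of (P x1 x2))"
      proof -
        have "construction V E \<pi> S1 S2 (Hc S1 S2)" using cons S by blast
        then show ?thesis unfolding construction_def by (elim exE conjE) (rule that; assumption)
      qed
      have TH: "T x \<subseteq> Hc S1 S2" unfolding H using x(1) by blast
      have bfs: "dist V (T x) x v = dist V E x v" if "v \<in> V" for v
        using T x that unfolding bfs_tree_def by blast
      have "dist V (Hc S1 S2) s t \<le> dist V (Hc S1 S2) s x + dist V (Hc S1 S2) x t"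
        by (rule dist_triangle)
      also have "\<dots> \<le> dist V (T x) s x + dist V (T x) x t"
        using TH by (intro add_mono dist_mono)
      also have "\<dots> = dist V E x s + dist V E x t"
        using bfs st by (simp add: dist_sym[of V "T x" s x])
      also have "\<dots> \<le> dist V E s t + 2"
        using close[OF G cs st i(1), of x] w i by simp
      also have "\<dots> \<le> dist V E s t + 4"
        by (intro add_left_mono) (simp add: numeral_eq_enat)
      finally show ?thesis unfolding Ev_def by simp
    qed
    define A where "A = sample_set V (9 * real (mu (card V)) / real (card V))"
    define B where "B = sample_set V (1 / real (mu (card V)))"
    have sam: "samples V = pair_pmf A B" unfolding samples_def A_def B_def ..
    have setS: "set_pmf (sample_set V q) \<subseteq> {S. S \<subseteq> V}" for q
      unfolding sample_set_def by auto
    define Bad where "Bad = {x :: 'a set \<times> 'a set. \<not> (fst x \<subseteq> V \<and> snd x \<subseteq> V)}"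
    define Miss where "Miss = {S :: 'a set. S \<inter> N = {}}"
    have bad0: "measure_pmf.prob (samples V) Bad = 0"
      unfolding measure_pmf_zero_iff sam Bad_def A_def B_def using setS by fastforce
    have sub: "UNIV - Miss \<times> UNIV \<subseteq> Ev \<union> Bad"
    proof
      fix y assume y: "y \<in> UNIV - Miss \<times> (UNIV :: 'a set set)"
      obtain a b where ab: "y = (a, b)" by (cases y)
      have "a \<inter> N \<noteq> {}" using y ab unfolding Miss_def by auto
      then show "y \<in> Ev \<union> Bad" using good[of a b] ab unfolding Bad_def by auto
    qed
    have "measure_pmf.prob (samples V) (UNIV - Miss \<times> UNIV) \<le> measure_pmf.prob (samples V) (Ev \<union> Bad)"
      using sub by (intro measure_pmf.finite_measure_mono) auto
    also have "\<dots> \<le> measure_pmf.prob (samples V) Ev + measure_pmf.prob (samples V) Bad"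
      by (intro measure_subadditive) (auto simp: measure_pmf.emeasure_eq_measure)
    also have "\<dots> = measure_pmf.prob (samples V) Ev" using bad0 by simp
    finally have le1: "measure_pmf.prob (samples V) (UNIV - Miss \<times> UNIV) \<le> measure_pmf.prob (samples V) Ev" .
    have "measure_pmf.prob (samples V) (UNIV - Miss \<times> UNIV) = 1 - measure_pmf.prob (samples V) (Miss \<times> UNIV)"
      using measure_pmf.prob_compl[of "Miss \<times> UNIV" "samples V"] by simp
    also have "measure_pmf.prob (samples V) (Miss \<times> UNIV) = measure_pmf.prob A Miss"
    proof -
      have "measure_pmf.prob (samples V) (Miss \<times> UNIV) = measure_pmf.prob (samples V) (fst -` Miss)"
        by (simp add: vimage_fst)
      also have "\<dots> = measure_pmf.prob (map_pmf fst (samples V)) Miss" by simp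
      also have "\<dots> = measure_pmf.prob A Miss" unfolding sam map_fst_pair_pmf ..
      finally show ?thesis .
    qed
    also have "measure_pmf.prob A Miss = (1 - min 1 (max 0 (9 * real m / real n))) ^ card N"
      unfolding A_def Miss_def m_def n_def by (rule prob_miss[OF finV NV])
    finally have eq1: "measure_pmf.prob (samples V) (UNIV - Miss \<times> UNIV) = 1 - (1 - min 1 (max 0 (9 * real m / real n))) ^ card N" .
    have bound: "(1 - min 1 (max 0 (9 * real m / real n))) ^ card N \<le> 1 / real n ^ 3"
    proof -
      have m5: "real m ^ 5 \<ge> real n ^ 2 * ln (real n)" using mu5[OF n2] unfolding m_def .
      have npos: "real n > 0" using n2 by simp
      have lnpos: "ln (real n) > 0" using n2 by simp
      have "real m ^ 5 > 0" using m5 npos lnpos by (smt (verit) mult_pos_pos zero_less_power)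
      then have mpos: "real m > 0" by (cases "m = 0") auto
      have kW: "real (card W) \<ge> real m ^ 3 / real n" using kbig by simp
      have cntr: "3 * real (card N) \<ge> real (card W) * real m"
        using cnt by (metis of_nat_le_iff of_nat_mult of_nat_numeral)
      have Wpos: "real (card W) > 0" using kbig mpos npos by (smt (verit) divide_nonneg_pos zero_le_power)
      have Npos: "card N > 0" using cntr Wpos mpos
        by (smt (verit) mult_pos_pos of_nat_0 of_nat_0_less_iff)
      show ?thesis
      proof (cases "9 * real m / real n \<ge> 1")
        case True
        then have "min 1 (max 0 (9 * real m / real n)) = 1" by simp
        then have "(1 - min 1 (max 0 (9 * real m / real n))) ^ card N = 0" using Npos by simp
        moreover have "0 \<le> 1 / real n ^ 3" by simp
        ultimately show ?thesis by linarith
      next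
        case False
        define r where "r = 9 * real m / real n"
        have r0: "r \<ge> 0" "r < 1" using False mpos npos unfolding r_def by auto
        have rr: "min 1 (max 0 (9 * real m / real n)) = r" using r0 unfolding r_def by simp
        have "(1 - r) ^ card N \<le> exp (- r) ^ card N"
          using r0 exp_ge_add_one_self[of "- r"] by (intro power_mono) auto
        also have "\<dots> = exp (- (r * real (card N)))" by (simp add: exp_of_nat_mult[symmetric] mult.commute)
        also have "\<dots> \<le> exp (- ln (real n ^ 3))"
        proof -
          have "r * real (card N) \<ge> r * (real (card W) * real m / 3)"
            using cntr r0 by (intro mult_left_mono) auto
          moreover have "real (card W) * real m / 3 \<ge> real m ^ 3 / real n * real m / 3"
            using kW mpos by (intro divide_right_mono mult_right_mono) auto
          moreover have "r * (real m ^ 3 / real n * real m / 3) = 3 * real m ^ 5 / real n ^ 2"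
            unfolding r_def using npos by (simp add: field_simps power_def)
          moreover have "3 * real m ^ 5 / real n ^ 2 \<ge> 3 * ln (real n)"
            using m5 npos by (simp add: field_simps)
          moreover have "ln (real n ^ 3) = 3 * ln (real n)" using npos by (simp add: ln_realpow)
          ultimately have "r * real (card N) \<ge> ln (real n ^ 3)"
            using r0 by (smt (verit) mult_left_mono)
          then show ?thesis by simp
        qed
        also have "\<dots> = 1 / real n ^ 3" using npos by (simp add: exp_minus inverse_eq_divide)
        finally show ?thesis unfolding rr .
      qed
    qed
    have "1 - 1 / real n ^ 3 \<le> measure_pmf.prob (samples V) Ev"
      using le1 eq1 bound by linarith
    then show ?thesis unfolding Ev_def n_def .
  qed
qed

end
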